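(* If $G$ is a minimally $2$-connected graph, then $\chi_s'(G) \le 4\Delta(G) - 3$.
   Context: All graphs are finite and simple; $\Delta(G)$ is the maximum degree. A $2$-connected graph $G$ is minimally $2$-connected if $G-e$ is not $2$-connected for every edge $e$ of $G$. A strong edge coloring of $G$ is an assignment of colors to the edges of $G$ such that every path with three edges receives three distinct colors; equivalently, any two distinct edges that share an endpoint, or whose endpoints are joined by an edge, receive different colors. The strong chromatic index $\chi_s'(G)$ is the minimum number of colors in a strong edge coloring of $G$. *)

theory Defs
  imports Main
begin

definition simple_graph :: "'a set \<Rightarrow> 'a set set \<Rightarrow> bool" where
  "simple_graph V E \<longleftrightarrow> finite V \<and> (\<forall>e\<in>E. \<exists>u v. e = {u, v} \<and> u \<noteq> v \<and> u \<in> V \<and> v \<in> V)"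

definition degree :: "'a set set \<Rightarrow> 'a \<Rightarrow> nat" where
  "degree E v = card {e\<in>E. v \<in> e}"

definition max_degree :: "'a set \<Rightarrow> 'a set set \<Rightarrow> nat" where
  "max_degree V E = Max (degree E ` V)"

definition adj_rel :: "'a set set \<Rightarrow> ('a \<times> 'a) set" where
  "adj_rel E = {(x, y). {x, y} \<in> E}"

definition connected_graph :: "'a set \<Rightarrow> 'a set set \<Rightarrow> bool" where
  "connected_graph V E \<longleftrightarrow> V \<noteq> {} \<and> (\<forall>u\<in>V. \<forall>w\<in>V. (u, w) \<in> (adj_rel E)\<^sup>*)"

definition delete_vertex :: "'a set \<Rightarrow> 'a set set \<Rightarrow> 'a \<Rightarrow> 'a set \<times> 'a set set" where
  "delete_vertex V E v = (V - {v}, {e\<in>E. v \<notin> e})"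

definition two_connected :: "'a set \<Rightarrow> 'a set set \<Rightarrow> bool" where
  "two_connected V E \<longleftrightarrow> card V > 2 \<and> connected_graph V E \<and>
     (\<forall>v\<in>V. case_prod connected_graph (delete_vertex V E v))"

definition minimally_two_connected :: "'a set \<Rightarrow> 'a set set \<Rightarrow> bool" where
  "minimally_two_connected V E \<longleftrightarrow> two_connected V E \<and> (\<forall>e\<in>E. \<not> two_connected V (E - {e}))"

definition strong_edge_coloring :: "'a set set \<Rightarrow> ('a set \<Rightarrow> nat) \<Rightarrow> bool" where
  "strong_edge_coloring E c \<longleftrightarrow>
     (\<forall>e\<in>E. \<forall>f\<in>E. e \<noteq> f \<and> (e \<inter> f \<noteq> {} \<or> (\<exists>u\<in>e. \<exists>v\<in>f. {u, v} \<in> E)) \<longrightarrow> c e \<noteq> c f)"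

definition strong_chromatic_index :: "'a set set \<Rightarrow> nat" where
  "strong_chromatic_index E = (LEAST k. \<exists>c. strong_edge_coloring E c \<and> c ` E \<subseteq> {..<k})"

end

theory Submission
  imports Defs
begin


definition nb :: "'a set set \<Rightarrow> 'a \<Rightarrow> 'a set" where "nb E x = {y. {x,y} \<in> E}"

definition ar :: "'a set set \<Rightarrow> 'a set \<Rightarrow> 'a set \<Rightarrow> ('a \<times> 'a) set" where
  "ar E W f = {(x,y). {x,y} \<in> E \<and> x \<notin> W \<and> y \<notin> W \<and> {x,y} \<noteq> f}"

lemma cross:
  assumes "(x,y) \<in> R\<^sup>*" "x \<in> S" "y \<notin> S"
  shows "\<exists>a b. (x,a) \<in> R\<^sup>* \<and> (a,b) \<in> R \<and> a \<in> S \<and> b \<notin> S"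
  using assms
proof (induction rule: rtrancl_induct)
  case base thus ?case by simp
next
  case (step y z)
  show ?case
  proof (cases "y \<in> S")
    case True thus ?thesis using step by blast
  next
    case False thus ?thesis using step by blast
  qed
qed

lemma ar_sym: "sym (ar E W f)"
  unfolding ar_def sym_def by (auto simp: insert_commute)

lemma ar_rt_sym: "(x,y) \<in> (ar E W f)\<^sup>* \<Longrightarrow> (y,x) \<in> (ar E W f)\<^sup>*"
  using sym_rtrancl[OF ar_sym] by (meson symD)

lemma ar_mono: "W \<subseteq> W' \<Longrightarrow> (x,y) \<in> (ar E W' f)\<^sup>* \<Longrightarrow> (x,y) \<in> (ar E W f)\<^sup>*"
proof -
  assume "W \<subseteq> W'" "(x,y) \<in> (ar E W' f)\<^sup>*"
  moreover have "ar E W' f \<subseteq> ar E W f" using \<open>W \<subseteq> W'\<close> unfolding ar_def by auto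
  ultimately show ?thesis using rtrancl_mono by blast
qed

lemma ar_sub:
  assumes "(x,y) \<in> (ar E W {})\<^sup>*" "(u,v) \<in> (ar E W {u,v})\<^sup>*"
  shows "(x,y) \<in> (ar E W {u,v})\<^sup>*"
  using assms(1)
proof (induction rule: rtrancl_induct)
  case base thus ?case by simp
next
  case (step y z)
  show ?case
  proof (cases "{y,z} = {u,v}")
    case True
    hence "(y,z) = (u,v) \<or> (y,z) = (v,u)" by (auto simp: doubleton_eq_iff)
    have uv: "(u,v) \<in> (ar E W {u,v})\<^sup>*" "(v,u) \<in> (ar E W {u,v})\<^sup>*"
      using assms(2) ar_rt_sym by auto
    have "(y,z) \<in> (ar E W {u,v})\<^sup>*" using uv \<open>(y,z) = (u,v) \<or> (y,z) = (v,u)\<close> by auto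
    thus ?thesis by (rule rtrancl_trans[OF step.IH])
  next
    case False
    hence "(y,z) \<in> ar E W {u,v}" using step.hyps(2) unfolding ar_def by auto
    thus ?thesis using step.IH by (meson rtrancl.rtrancl_into_rtrancl)
  qed
qed

lemma ar_split:
  assumes "(x,y) \<in> (ar E W {})\<^sup>*"
  shows "(u,y) \<in> (ar E W {u,v})\<^sup>* \<or> (v,y) \<in> (ar E W {u,v})\<^sup>* \<or> (x,y) \<in> (ar E W {u,v})\<^sup>*"
  using assms
proof (induction rule: rtrancl_induct)
  case base thus ?case by simp
next
  case (step y z)
  show ?case
  proof (cases "{y,z} = {u,v}")
    case True
    hence "z = u \<or> z = v" by (auto simp: doubleton_eq_iff)
    thus ?thesis by auto
  next
    case False
    hence "(y,z) \<in> ar E W {u,v}" using step.hyps(2) unfolding ar_def by auto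
    thus ?thesis using step.IH by (meson rtrancl.rtrancl_into_rtrancl)
  qed
qed

lemma ar_avoid:
  assumes "(x,y) \<in> (ar E W f)\<^sup>*" "x \<notin> W" shows "y \<notin> W"
  using assms by (induction rule: rtrancl_induct) (auto simp: ar_def)

lemma greedy:
  fixes E :: "'b set" and r :: "'b \<Rightarrow> nat" and cf :: "'b \<Rightarrow> 'b \<Rightarrow> bool"
  assumes fin: "finite E" and bnd: "\<forall>e\<in>E. card {f\<in>E. cf e f \<and> r f \<le> r e} \<le> K"
    and sym: "\<And>e f. cf e f \<Longrightarrow> cf f e" and irr: "\<And>e. \<not> cf e e"
  shows "\<exists>c. (\<forall>e\<in>E. \<forall>f\<in>E. cf e f \<longrightarrow> c e \<noteq> c f) \<and> c ` E \<subseteq> {..<Suc K}"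
proof -
  have "\<forall>F. F \<subseteq> E \<longrightarrow> (\<exists>c. (\<forall>e\<in>F. \<forall>f\<in>F. cf e f \<longrightarrow> c e \<noteq> c f) \<and> c ` F \<subseteq> {..<Suc K})"
  proof (intro allI impI)
    fix F assume "F \<subseteq> E"
    hence "finite F" using fin finite_subset by blast
    thus "\<exists>c. (\<forall>e\<in>F. \<forall>f\<in>F. cf e f \<longrightarrow> c e \<noteq> c f) \<and> c ` F \<subseteq> {..<Suc K}"
      using \<open>F \<subseteq> E\<close>
    proof (induction F rule: finite_ranking_induct[where f = r])
      case empty thus ?case by simp
    next
      case (insert x S)
      then obtain c where c: "\<forall>e\<in>S. \<forall>f\<in>S. cf e f \<longrightarrow> c e \<noteq> c f" "c ` S \<subseteq> {..<Suc K}" by auto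
      have xE: "x \<in> E" using insert.prems by auto
      let ?U = "c ` {f\<in>S. cf x f}"
      have sub: "{f\<in>S. cf x f} \<subseteq> {f\<in>E. cf x f \<and> r f \<le> r x}" using insert by auto
      have "card ?U \<le> card {f\<in>S. cf x f}" by (rule card_image_le) (use insert in auto)
      also have "\<dots> \<le> card {f\<in>E. cf x f \<and> r f \<le> r x}" by (rule card_mono) (use fin sub in auto)
      also have "\<dots> \<le> K" using bnd xE by auto
      finally have cU: "card ?U \<le> K" .
      have "{..<Suc K} - ?U \<noteq> {}"
      proof
        assume "{..<Suc K} - ?U = {}"
        hence "{..<Suc K} \<subseteq> ?U" by auto
        hence "card {..<Suc K} \<le> card ?U" by (rule card_mono[rotated]) (use insert in auto)
        thus False using cU by simp
      qed
      then obtain col where col: "col < Suc K" "col \<notin> ?U" by auto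
      define c' where "c' = c(x := col)"
      have "\<forall>e\<in>insert x S. \<forall>f\<in>insert x S. cf e f \<longrightarrow> c' e \<noteq> c' f"
      proof (intro ballI impI)
        fix e f assume ef: "e \<in> insert x S" "f \<in> insert x S" "cf e f"
        show "c' e \<noteq> c' f"
        proof (cases "e = x")
          case True
          hence "f \<noteq> x" using irr ef by auto
          thus ?thesis using True ef col unfolding c'_def by auto
        next
          case False
          show ?thesis
          proof (cases "f = x")
            case True
            hence "cf x e" using ef sym by auto
            thus ?thesis using True False ef col unfolding c'_def by auto
          next
            case False
            thus ?thesis using \<open>e \<noteq> x\<close> ef c unfolding c'_def by auto
          qed
        qed
      qed
      moreover have "c' ` insert x S \<subseteq> {..<Suc K}" using c col unfolding c'_def by auto
      ultimately show ?case by blast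
    qed
  qed
  thus ?thesis by blast
qed

lemma degen_order:
  fixes N :: "'a \<Rightarrow> 'a set"
  assumes "finite X" "\<forall>Y\<subseteq>X. Y \<noteq> {} \<longrightarrow> (\<exists>y\<in>Y. card (N y \<inter> Y) \<le> 1)"
  shows "\<exists>idx::'a\<Rightarrow>nat. inj_on idx X \<and> (\<forall>x\<in>X. idx x < card X) \<and>
           (\<forall>x\<in>X. card {y \<in> N x \<inter> X. idx y < idx x} \<le> 1)"
  using assms
proof (induction "card X" arbitrary: X)
  case 0
  hence "X = {}" by simp
  thus ?case by simp
next
  case (Suc n)
  hence "X \<noteq> {}" by auto
  then obtain y where y: "y \<in> X" "card (N y \<inter> X) \<le> 1" using Suc.prems by blast
  let ?X = "X - {y}"
  have cX: "n = card ?X" using Suc.hyps(2) y by simp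
  have finX: "finite ?X" using Suc.prems by simp
  have hX: "\<forall>Y\<subseteq>?X. Y \<noteq> {} \<longrightarrow> (\<exists>y\<in>Y. card (N y \<inter> Y) \<le> 1)"
    using Suc.prems(2) by blast
  have "\<exists>idx::'a\<Rightarrow>nat. inj_on idx ?X \<and> (\<forall>x\<in>?X. idx x < card ?X) \<and>
           (\<forall>x\<in>?X. card {z \<in> N x \<inter> ?X. idx z < idx x} \<le> 1)"
    by (rule Suc.hyps(1)[OF cX finX hX])
  then obtain idx0 where i0: "inj_on idx0 ?X" "\<forall>x\<in>?X. idx0 x < n"
     "\<forall>x\<in>?X. card {z \<in> N x \<inter> ?X. idx0 z < idx0 x} \<le> 1"
    unfolding cX[symmetric] by blast
  define idx where "idx = idx0(y := n)"
  have "inj_on idx X"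
    unfolding inj_on_def
  proof (intro ballI impI)
    fix a b assume ab: "a \<in> X" "b \<in> X" "idx a = idx b"
    show "a = b"
    proof (cases "a = y")
      case True
      show ?thesis
      proof (rule ccontr)
        assume "a \<noteq> b"
        hence "b \<in> ?X" using True ab by auto
        hence "idx0 b < n" using i0(2) by auto
        thus False using ab True \<open>a \<noteq> b\<close> unfolding idx_def by simp
      qed
    next
      case False
      show ?thesis
      proof (cases "b = y")
        case True
        have "idx0 a < n" using i0(2) False ab by auto
        thus ?thesis using ab True False unfolding idx_def by simp
      next
        case False
        hence "idx0 a = idx0 b" using ab \<open>a \<noteq> y\<close> unfolding idx_def by simp
        thus ?thesis using i0(1) ab False \<open>a \<noteq> y\<close> unfolding inj_on_def by blast
      qed
    qed
  qed
  moreover have "\<forall>x\<in>X. idx x < card X"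
  proof
    fix x assume "x \<in> X"
    thus "idx x < card X" using i0(2) Suc.hyps(2) unfolding idx_def
      by (cases "x = y") (auto, metis Diff_iff empty_iff insert_iff less_Suc_eq)
  qed
  moreover have "\<forall>x\<in>X. card {z \<in> N x \<inter> X. idx z < idx x} \<le> 1"
  proof
    fix x assume x: "x \<in> X"
    show "card {z \<in> N x \<inter> X. idx z < idx x} \<le> 1"
    proof (cases "x = y")
      case True
      have "card {z \<in> N x \<inter> X. idx z < idx x} \<le> card (N y \<inter> X)"
        by (rule card_mono) (use Suc.prems True in auto)
      thus ?thesis using y by simp
    next
      case False
      have lt: "idx0 x < n" using i0(2) x False by auto
      have "{z \<in> N x \<inter> X. idx z < idx x} = {z \<in> N x \<inter> ?X. idx0 z < idx0 x}"
      proof (rule set_eqI)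
        fix z
        show "z \<in> {z \<in> N x \<inter> X. idx z < idx x} \<longleftrightarrow> z \<in> {z \<in> N x \<inter> ?X. idx0 z < idx0 x}"
          using False lt unfolding idx_def by (cases "z = y") auto
      qed
      thus ?thesis using i0(3) False x by auto
    qed
  qed
  ultimately show ?case by blast
qed




locale mtc =
  fixes V :: "'a set" and E :: "'a set set"
  assumes sg: "simple_graph V E" and m2: "minimally_two_connected V E"
begin

lemma finV: "finite V" using sg simple_graph_def by blast

lemma edge: "e \<in> E \<Longrightarrow> \<exists>u v. e = {u,v} \<and> u \<noteq> v \<and> u \<in> V \<and> v \<in> V"
  using sg simple_graph_def by blast

lemma edgeV: assumes "{x,y} \<in> E" shows "x \<in> V" "y \<in> V" "x \<noteq> y"
proof -
  obtain u v where "{x,y} = {u,v}" "u \<noteq> v" "u \<in> V" "v \<in> V" using edge[OF assms] by blast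
  thus "x \<in> V" "y \<in> V" "x \<noteq> y" by (auto simp: doubleton_eq_iff)
qed

lemma finE: "finite E"
proof -
  have "E \<subseteq> Pow V" using edge by blast
  thus ?thesis using finV by (meson finite_Pow_iff finite_subset)
qed

lemma tc: "two_connected V E" using m2 minimally_two_connected_def by blast

lemma cardV: "card V > 2" using tc two_connected_def by blast

lemma adj_ar: "adj_rel E = ar E {} {}"
  unfolding adj_rel_def ar_def by auto

lemma conn0: "x \<in> V \<Longrightarrow> y \<in> V \<Longrightarrow> (x,y) \<in> (ar E {} {})\<^sup>*"
  using tc unfolding two_connected_def connected_graph_def adj_ar by blast

lemma conn1: assumes "w \<in> V" "x \<in> V - {w}" "y \<in> V - {w}" shows "(x,y) \<in> (ar E {w} {})\<^sup>*"
proof -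
  have "connected_graph (V - {w}) {e\<in>E. w \<notin> e}"
    using tc assms(1) unfolding two_connected_def delete_vertex_def by auto
  moreover have "adj_rel {e\<in>E. w \<notin> e} = ar E {w} {}" unfolding adj_rel_def ar_def by auto
  ultimately show ?thesis using assms unfolding connected_graph_def by auto
qed

lemma nb_V: "y \<in> nb E x \<Longrightarrow> y \<in> V" using edgeV unfolding nb_def by blast
lemma nb_irr: "x \<notin> nb E x" using edgeV unfolding nb_def by blast
lemma nb_sym: "y \<in> nb E x \<longleftrightarrow> x \<in> nb E y" unfolding nb_def by (simp add: insert_commute)
lemma fin_nb: "finite (nb E x)" using nb_V finV by (meson finite_subset subsetI)

lemma star_eq: "{f\<in>E. x \<in> f} = (\<lambda>y. {x,y}) ` nb E x"
proof (rule set_eqI)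
  fix f show "f \<in> {f\<in>E. x \<in> f} \<longleftrightarrow> f \<in> (\<lambda>y. {x,y}) ` nb E x"
  proof
    assume "f \<in> {f\<in>E. x \<in> f}"
    then obtain u v where "f = {u,v}" "f \<in> E" "x \<in> f" using edge by blast
    thus "f \<in> (\<lambda>y. {x,y}) ` nb E x" unfolding nb_def
      by (auto simp: insert_commute)
  qed (auto simp: nb_def)
qed

lemma deg_nb: "degree E x = card (nb E x)"
proof -
  have "inj_on (\<lambda>y. {x,y}) (nb E x)" unfolding inj_on_def by (auto simp: doubleton_eq_iff)
  thus ?thesis unfolding degree_def star_eq by (simp add: card_image)
qed

lemma star_minus: assumes "{y,x} \<in> E" shows "card ({f\<in>E. x \<in> f} - {{y,x}}) = card (nb E x) - 1"
proof -
  have "{y,x} \<in> {f\<in>E. x \<in> f}" using assms by auto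
  moreover have "finite {f\<in>E. x \<in> f}" using finE by simp
  ultimately show ?thesis using deg_nb[of x] unfolding degree_def by simp
qed

lemma star_le: assumes "{y,x} \<in> E" shows "card {f\<in>E. x \<in> f \<and> f \<noteq> {y,x} \<and> P f} \<le> card (nb E x) - 1"
proof -
  have "card {f\<in>E. x \<in> f \<and> f \<noteq> {y,x} \<and> P f} \<le> card ({f\<in>E. x \<in> f} - {{y,x}})"
    by (rule card_mono) (use finE in auto)
  thus ?thesis using star_minus[OF assms] by simp
qed

lemma cut:
  assumes "c \<in> V" "T \<subseteq> V - {c}" "t \<in> T" "z \<in> V - {c} - T"
    and noe: "\<forall>x\<in>T. \<forall>y\<in>V - {c} - T. {x,y} \<notin> E"
  shows False
proof -
  have tz: "(t,z) \<in> (ar E {c} {})\<^sup>*" by (rule conn1) (use assms in auto)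
  have "z \<notin> T" using assms(4) by blast
  then obtain a b where ab: "(a,b) \<in> ar E {c} {}" "a \<in> T" "b \<notin> T"
    using cross[OF tz assms(3)] by blast
  hence "{a,b} \<in> E" "b \<noteq> c" unfolding ar_def by auto
  hence "b \<in> V - {c} - T" using edgeV ab by auto
  thus False using noe ab \<open>{a,b} \<in> E\<close> by blast
qed

lemma ext:
  assumes "u \<in> T" "T \<subseteq> V" "z \<in> V - T"
    and ex: "\<forall>x\<in>T. \<forall>y\<in>V - T. {x,y} \<in> E \<longrightarrow> x = u"
    and c2: "card (nb E u - T) \<le> 2" and c3: "card (nb E u) \<ge> 3"
  shows False
proof (cases "T - {u} = {}")
  case False
  then obtain t where "t \<in> T - {u}" by blast
  show False
  proof (rule cut[of u "T - {u}" t z])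
    show "u \<in> V" using assms by auto
    show "T - {u} \<subseteq> V - {u}" using assms by auto
    show "t \<in> T - {u}" by fact
    show "z \<in> V - {u} - (T - {u})" using assms by auto
    show "\<forall>x\<in>T - {u}. \<forall>y\<in>V - {u} - (T - {u}). {x, y} \<notin> E"
      using ex by auto
  qed
next
  case True
  hence "nb E u - T = nb E u" using nb_irr by auto
  thus False using c2 c3 by simp
qed

lemma deg2: assumes "x \<in> V" shows "card (nb E x) \<ge> 2"
proof (rule ccontr)
  assume "\<not> card (nb E x) \<ge> 2"
  hence c1: "card (nb E x) \<le> 1" by simp
  obtain c where c: "c \<in> V" "c \<noteq> x" "nb E x \<subseteq> {c}"
  proof (cases "nb E x = {}")
    case True
    have "card (V - {x}) = card V - 1" using assms finV by simp
    hence "card (V - {x}) > 0" using cardV by linarith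
    hence "V - {x} \<noteq> {}" by (simp add: card_gt_0_iff)
    then obtain c where "c \<in> V - {x}" by blast
    thus ?thesis using that True by blast
  next
    case False
    have "card (nb E x) \<noteq> 0" using False fin_nb by simp
    hence "card (nb E x) = 1" using c1 by linarith
    then obtain c where "nb E x = {c}" by (auto simp: card_1_singleton_iff)
    thus ?thesis using that nb_V nb_irr by blast
  qed
  have "card (V - {c,x}) \<ge> 1"
  proof -
    have "card (V - {c,x}) \<ge> card V - card {c,x}" by (rule diff_card_le_card_Diff) simp
    moreover have "card {c,x} \<le> 2" by (simp add: card_insert_le_m1)
    ultimately show ?thesis using cardV by linarith
  qed
  have "V - {c,x} \<noteq> {}"
  proof
    assume "V - {c,x} = {}"
    with \<open>card (V - {c,x}) \<ge> 1\<close> show False by simp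
  qed
  then obtain z where z: "z \<in> V - {c,x}" by blast
  show False
  proof (rule cut[of c "{x}" x z])
    show "\<forall>xa\<in>{x}. \<forall>y\<in>V - {c} - {x}. {xa, y} \<notin> E"
      using c unfolding nb_def by auto
  qed (use c z assms in auto)
qed

definition sep where
  "sep u v w A \<longleftrightarrow> {u,v} \<in> E \<and> w \<in> V \<and> w \<noteq> u \<and> w \<noteq> v \<and> u \<in> A \<and> v \<notin> A \<and> A \<subseteq> V - {w} \<and>
     (\<forall>x\<in>A. \<forall>y\<in>V - {w} - A. {x,y} \<in> E \<longrightarrow> {x,y} = {u,v})"

lemma crit:
  assumes "{u,v} \<in> E"
  shows "\<exists>w\<in>V. w \<noteq> u \<and> w \<noteq> v \<and> (u,v) \<notin> (ar E {w} {u,v})\<^sup>*"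
proof -
  have uv: "u \<in> V" "v \<in> V" "u \<noteq> v" using edgeV assms by auto
  have ntc: "\<not> two_connected V (E - {{u,v}})" using m2 assms minimally_two_connected_def by blast
  have adj1: "adj_rel (E - {{u,v}}) = ar E {} {u,v}" unfolding adj_rel_def ar_def by auto
  have adj2: "\<And>w. adj_rel {e\<in>E - {{u,v}}. w \<notin> e} = ar E {w} {u,v}" unfolding adj_rel_def ar_def by auto
  have "V - {u,v} \<noteq> {}"
  proof -
    have "card (V - {u,v}) \<ge> card V - card {u,v}" by (rule diff_card_le_card_Diff) simp
    moreover have "card {u,v} \<le> 2" by (simp add: card_insert_le_m1)
    ultimately have c1: "card (V - {u,v}) \<ge> 1" using cardV by linarith
    show ?thesis
    proof
      assume "V - {u,v} = {}"
      with c1 show False by simp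
    qed
  qed
  then obtain w0 where w0: "w0 \<in> V" "w0 \<noteq> u" "w0 \<noteq> v" by blast
  show ?thesis
  proof (cases "connected_graph V (E - {{u,v}})")
    case False
    have "\<not> (\<forall>x\<in>V. \<forall>y\<in>V. (x,y) \<in> (ar E {} {u,v})\<^sup>*)"
    proof
      assume "\<forall>x\<in>V. \<forall>y\<in>V. (x,y) \<in> (ar E {} {u,v})\<^sup>*"
      moreover have "V \<noteq> {}" using uv by auto
      ultimately have "connected_graph V (E - {{u,v}})" unfolding connected_graph_def adj1 by simp
      thus False using False by simp
    qed
    then obtain x y where xy: "x \<in> V" "y \<in> V" "(x,y) \<notin> (ar E {} {u,v})\<^sup>*" by blast
    have "(u,v) \<notin> (ar E {w0} {u,v})\<^sup>*"
    proof
      assume "(u,v) \<in> (ar E {w0} {u,v})\<^sup>*"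
      hence h: "(u,v) \<in> (ar E {} {u,v})\<^sup>*" by (rule ar_mono[rotated]) simp
      have "(x,y) \<in> (ar E {} {u,v})\<^sup>*" by (rule ar_sub[OF conn0[OF xy(1,2)] h])
      thus False using xy(3) by contradiction
    qed
    thus ?thesis using w0 by blast
  next
    case True
    have "\<exists>w\<in>V. \<not> case_prod connected_graph (delete_vertex V (E - {{u,v}}) w)"
    proof (rule ccontr)
      assume "\<not> (\<exists>w\<in>V. \<not> case_prod connected_graph (delete_vertex V (E - {{u,v}}) w))"
      hence "two_connected V (E - {{u,v}})" using True cardV unfolding two_connected_def by simp
      thus False using ntc by contradiction
    qed
    then obtain w where w: "w \<in> V" "\<not> connected_graph (V - {w}) {e\<in>E - {{u,v}}. w \<notin> e}"
      unfolding delete_vertex_def by auto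
    have "card (V - {w}) = card V - 1" using w(1) finV by simp
    hence "card (V - {w}) > 0" using cardV by linarith
    hence ne: "V - {w} \<noteq> {}" by (simp add: card_gt_0_iff)
    have "\<not> (\<forall>x\<in>V - {w}. \<forall>y\<in>V - {w}. (x,y) \<in> (ar E {w} {u,v})\<^sup>*)"
    proof
      assume "\<forall>x\<in>V - {w}. \<forall>y\<in>V - {w}. (x,y) \<in> (ar E {w} {u,v})\<^sup>*"
      hence "connected_graph (V - {w}) {e\<in>E - {{u,v}}. w \<notin> e}"
        unfolding connected_graph_def adj2 using ne by simp
      thus False using w(2) by contradiction
    qed
    then obtain x y where xy: "x \<in> V - {w}" "y \<in> V - {w}" "(x,y) \<notin> (ar E {w} {u,v})\<^sup>*"
      by blast
    have wuv: "w \<noteq> u \<and> w \<noteq> v"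
    proof (rule ccontr)
      assume a: "\<not> (w \<noteq> u \<and> w \<noteq> v)"
      have "ar E {w} {u,v} = ar E {w} {}"
      proof (rule set_eqI)
        fix p show "p \<in> ar E {w} {u,v} \<longleftrightarrow> p \<in> ar E {w} {}"
          using a unfolding ar_def by (cases p) (auto simp: doubleton_eq_iff)
      qed
      moreover have "(x,y) \<in> (ar E {w} {})\<^sup>*" by (rule conn1[OF w(1) xy(1,2)])
      ultimately show False using xy(3) by simp
    qed
    have "(u,v) \<notin> (ar E {w} {u,v})\<^sup>*"
    proof
      assume h: "(u,v) \<in> (ar E {w} {u,v})\<^sup>*"
      have "(x,y) \<in> (ar E {w} {u,v})\<^sup>*" by (rule ar_sub[OF conn1[OF w(1) xy(1,2)] h])
      thus False using xy(3) by contradiction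
    qed
    thus ?thesis using w wuv by blast
  qed
qed

lemma comps:
  assumes f: "{u,u'} \<in> E" and w: "w \<in> V" "w \<noteq> u" "w \<noteq> u'"
    and nr: "(u,u') \<notin> (ar E {w} {u,u'})\<^sup>*"
  defines "A1 \<equiv> {x\<in>V. (u,x) \<in> (ar E {w} {u,u'})\<^sup>*}"
  shows "sep u u' w A1" "sep u' u w (V - {w} - A1)"
    "V - {w} - A1 = {x\<in>V. (u',x) \<in> (ar E {w} {u,u'})\<^sup>*}"
proof -
  let ?R = "ar E {w} {u,u'}"
  let ?B1 = "{x\<in>V. (u',x) \<in> ?R\<^sup>*}"
  have uV: "u \<in> V" "u' \<in> V" "u \<noteq> u'" using edgeV f by auto
  have disj: "A1 \<inter> ?B1 = {}"
  proof (rule ccontr)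
    assume "A1 \<inter> ?B1 \<noteq> {}"
    then obtain x where "(u,x) \<in> ?R\<^sup>*" "(u',x) \<in> ?R\<^sup>*" unfolding A1_def by blast
    hence "(u,u') \<in> ?R\<^sup>*" using ar_rt_sym by (meson rtrancl_trans)
    thus False using nr by blast
  qed
  have nw: "w \<notin> A1 \<union> ?B1" using ar_avoid[of _ _ E "{w}"] w unfolding A1_def by blast
  have cov: "V - {w} \<subseteq> A1 \<union> ?B1"
  proof
    fix x assume x: "x \<in> V - {w}"
    have "(u,x) \<in> (ar E {w} {})\<^sup>*" using conn1 w x uV by blast
    hence "(u,x) \<in> ?R\<^sup>* \<or> (u',x) \<in> ?R\<^sup>*" using ar_split[of u x E "{w}" u u'] by blast
    thus "x \<in> A1 \<union> ?B1" using x unfolding A1_def by blast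
  qed
  have Beq: "V - {w} - A1 = ?B1" using disj nw cov by blast
  have cr: "\<forall>x\<in>A1. \<forall>y\<in>?B1. {x,y} \<in> E \<longrightarrow> {x,y} = {u,u'}"
  proof (intro ballI impI)
    fix x y assume xy: "x \<in> A1" "y \<in> ?B1" "{x,y} \<in> E"
    show "{x,y} = {u,u'}"
    proof (rule ccontr)
      assume "{x,y} \<noteq> {u,u'}"
      hence "(x,y) \<in> ?R" using xy nw unfolding ar_def by auto
      hence "(u,y) \<in> ?R\<^sup>*" using xy unfolding A1_def by auto
      thus False using xy disj unfolding A1_def by blast
    qed
  qed
  have uA: "u \<in> A1" using uV unfolding A1_def by auto
  have uB: "u' \<in> ?B1" using uV by auto
  show "sep u u' w A1" unfolding sep_def
  proof (intro conjI)
    show "u' \<notin> A1" using uB disj by blast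
    show "A1 \<subseteq> V - {w}" using nw unfolding A1_def by blast
    show "\<forall>x\<in>A1. \<forall>y\<in>V - {w} - A1. {x, y} \<in> E \<longrightarrow> {x, y} = {u, u'}"
      using cr Beq by simp
  qed (use f w uA in auto)
  show "sep u' u w (V - {w} - A1)" unfolding sep_def Beq
  proof (intro conjI)
    show "{u', u} \<in> E" using f by (simp add: insert_commute)
    have Aeq: "V - {w} - ?B1 = A1" using Beq disj nw cov unfolding A1_def by blast
    show "\<forall>x\<in>?B1. \<forall>y\<in>V - {w} - ?B1. {x, y} \<in> E \<longrightarrow> {x, y} = {u', u}"
    proof (intro ballI impI)
      fix x y assume xy: "x \<in> ?B1" "y \<in> V - {w} - ?B1" "{x,y} \<in> E"
      have "{y,x} \<in> E" using xy(3) by (simp add: insert_commute)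
      hence "{y,x} = {u,u'}" using cr xy Aeq by blast
      thus "{x,y} = {u',u}" by (simp add: insert_commute)
    qed
    show "w \<in> V" by (rule w(1))
    show "w \<noteq> u'" by (rule w(3))
    show "w \<noteq> u" by (rule w(2))
    show "u' \<in> ?B1" by (rule uB)
    show "u \<notin> ?B1" using uA disj by blast
    show "?B1 \<subseteq> V - {w}" using nw by blast
  qed
  show "V - {w} - A1 = ?B1" by (rule Beq)
qed

end



context mtc
begin

lemma sepD:
  assumes "sep u v w A"
  shows "{u,v} \<in> E" "w \<in> V" "w \<noteq> u" "w \<noteq> v" "u \<in> A" "v \<notin> A" "A \<subseteq> V - {w}"
    "\<And>x y. x \<in> A \<Longrightarrow> y \<in> V - {w} - A \<Longrightarrow> {x,y} \<in> E \<Longrightarrow> {x,y} = {u,v}"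
  using assms unfolding sep_def by blast+

lemma dblL: "{x,y} = {u,v} \<Longrightarrow> x = u \<or> x = v"
  by (auto simp: doubleton_eq_iff)
lemma dblR: "{x,y} = {u,v} \<Longrightarrow> y = u \<or> y = v"
  by (auto simp: doubleton_eq_iff)
lemma dbl2: "{x,y} = {x,z} \<Longrightarrow> y = z"
  by (auto simp: doubleton_eq_iff)
lemma dbl3: "{x,y} = {u,v} \<Longrightarrow> y = v \<Longrightarrow> u \<noteq> v \<Longrightarrow> x = u"
  by (auto simp: doubleton_eq_iff)
lemma dbl4: "{x,y} = {u,v} \<Longrightarrow> x = u \<Longrightarrow> u \<noteq> v \<Longrightarrow> y = v"
  by (auto simp: doubleton_eq_iff)
lemma dbl5: "{x,y} = {u,v} \<Longrightarrow> x = v \<Longrightarrow> u \<noteq> v \<Longrightarrow> y = u"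
  by (auto simp: doubleton_eq_iff)

lemma forest:
  assumes XV: "X \<subseteq> V" and Xne: "X \<noteq> {}" and d3: "\<forall>x\<in>X. card (nb E x) \<ge> 3"
  shows "\<exists>x\<in>X. card (nb E x \<inter> X) \<le> 1"
proof (rule ccontr)
  assume "\<not> ?thesis"
  hence two: "\<forall>x\<in>X. card (nb E x \<inter> X) \<ge> 2" by auto
  have other: "\<exists>y \<in> nb E x \<inter> X. y \<noteq> z" if "x \<in> X" for x z
  proof (rule ccontr)
    assume "\<not> (\<exists>y \<in> nb E x \<inter> X. y \<noteq> z)"
    hence "nb E x \<inter> X \<subseteq> {z}" by auto
    hence "card (nb E x \<inter> X) \<le> card {z}" by (rule card_mono[rotated]) simp
    moreover have "card (nb E x \<inter> X) \<ge> 2" using two that by blast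
    ultimately show False by simp
  qed
  define P where "P = (\<lambda>(u,v,w,A). u \<in> X \<and> v \<in> X \<and> sep u v w A)"
  define m where "m = (\<lambda>(u::'a,v::'a,w::'a,A::'a set). card A)"
  obtain x0 where x0: "x0 \<in> X" using Xne by blast
  obtain y0 where y0: "y0 \<in> nb E x0 \<inter> X" using other[OF x0] by blast
  have e0: "{x0,y0} \<in> E" using y0 unfolding nb_def by simp
  obtain w0 where w0: "w0 \<in> V" "w0 \<noteq> x0" "w0 \<noteq> y0" "(x0,y0) \<notin> (ar E {w0} {x0,y0})\<^sup>*"
    using crit[OF e0] by blast
  have "sep x0 y0 w0 {x\<in>V. (x0, x) \<in> (ar E {w0} {x0,y0})\<^sup>*}"
    by (rule comps(1)[OF e0 w0])
  hence "P (x0,y0,w0,{x\<in>V. (x0, x) \<in> (ar E {w0} {x0,y0})\<^sup>*})" using x0 y0 unfolding P_def by auto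
  then obtain q where q: "P q" "\<forall>q'. P q' \<longrightarrow> m q \<le> m q'" using ex_has_least_nat[of P _ m] by blast
  obtain u v w A where qd: "q = (u,v,w,A)" by (cases q) auto
  have uX: "u \<in> X" and vX: "v \<in> X" and sA: "sep u v w A" using q(1) unfolding qd P_def by auto
  have minA: "card A \<le> card A'" if "u' \<in> X" "v' \<in> X" "sep u' v' w' A'" for u' v' w' A'
    using q(2) that unfolding qd P_def m_def by fastforce
  note sA' = sepD[OF sA]
  define B where "B = V - {w} - A"
  have finA: "finite A" using sA'(7) finV finite_subset by blast
  have uV: "u \<in> V" "v \<in> V" "u \<noteq> v" using edgeV sA'(1) by auto
  have vB: "v \<in> B" using uV sA' unfolding B_def by auto
  have crossA: "{x,y} = {u,v}" if "x \<in> A" "y \<in> B" "{x,y} \<in> E" for x y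
    using sA'(8) that unfolding B_def by blast
  have crossA': "x = u" if "x \<in> A" "y \<in> B" "{x,y} \<in> E" for x y
  proof -
    have "{x,y} = {u,v}" by (rule crossA[OF that])
    hence "x = u \<or> x = v" by (rule dblL)
    thus ?thesis using that(1) sA'(6) by blast
  qed
  have VAB: "x \<in> A \<or> x \<in> B \<or> x = w" if "x \<in> V" for x using that unfolding B_def by blast
  have AB: "A \<inter> B = {}" "w \<notin> A" "w \<notin> B" using sA'(7) unfolding B_def by auto
  obtain u' where u': "u' \<in> nb E u \<inter> X" "u' \<noteq> v" using other[OF uX] by blast
  have f: "{u,u'} \<in> E" using u' unfolding nb_def by simp
  have u'V: "u' \<in> V" "u \<noteq> u'" using edgeV[OF f] by auto
  have u'B: "u' \<notin> B"
  proof
    assume "u' \<in> B"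
    hence "{u,u'} = {u,v}" by (rule crossA[OF sA'(5) _ f])
    hence "u' = v" by (rule dbl2)
    thus False using u'(2) by contradiction
  qed
  have u'A: "u' \<in> A \<or> u' = w" using VAB[OF u'V(1)] u'B by blast
  obtain w1 where w1: "w1 \<in> V" "w1 \<noteq> u" "w1 \<noteq> u'" and nr: "(u,u') \<notin> (ar E {w1} {u,u'})\<^sup>*"
    using crit[OF f] by blast
  define R where "R = ar E {w1} {u,u'}"
  define A1 where "A1 = {x\<in>V. (u, x) \<in> R\<^sup>*}"
  define B1 where "B1 = V - {w1} - A1"
  have sA1: "sep u u' w1 A1" using comps(1)[OF f w1 nr] unfolding A1_def R_def .
  have sB1: "sep u' u w1 B1" using comps(2)[OF f w1 nr] unfolding A1_def B1_def R_def .
  have B1eq: "B1 = {x\<in>V. (u', x) \<in> R\<^sup>*}" using comps(3)[OF f w1 nr] unfolding A1_def B1_def R_def .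
  note sA1' = sepD[OF sA1]
  note sB1' = sepD[OF sB1]
  have cross1: "{x,y} = {u,u'}" if "x \<in> A1" "y \<in> B1" "{x,y} \<in> E" for x y
    using sA1'(8) that unfolding B1_def by blast
  have A1B1: "A1 \<inter> B1 = {}" "w1 \<notin> A1" "w1 \<notin> B1" "A1 \<union> B1 = V - {w1}"
    using sA1'(7) unfolding B1_def by auto
  show False
  proof (cases "w1 \<in> B")
    case False
    have w1A: "w1 \<in> A \<or> w1 = w" using VAB[OF w1(1)] False by blast
    have vA1: "v \<in> A1"
    proof -
      have "{u,v} \<noteq> {u,u'}"
      proof
        assume "{u,v} = {u,u'}" hence "v = u'" by (rule dbl2)
        thus False using u'(2) by simp
      qed
      moreover have "v \<noteq> w1" using vB False by auto
      ultimately have "(u,v) \<in> R" unfolding R_def ar_def using sA'(1) w1 by auto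
      thus ?thesis unfolding A1_def using uV by auto
    qed
    have BA1: "B \<subseteq> A1"
    proof (rule ccontr)
      assume "\<not> B \<subseteq> A1"
      then obtain t where t: "t \<in> B" "t \<notin> A1" by blast
      have "t \<in> B1" using t False unfolding B1_def B_def by auto
      show False
      proof (rule cut[of w "B \<inter> B1" t u])
        show "w \<in> V" by (rule sA'(2))
        show "B \<inter> B1 \<subseteq> V - {w}" unfolding B_def by auto
        show "t \<in> B \<inter> B1" using t \<open>t \<in> B1\<close> by auto
        show "u \<in> V - {w} - B \<inter> B1" using sA'(5) sA'(3)[symmetric] uV AB by auto
        show "\<forall>x\<in>B \<inter> B1. \<forall>y\<in>V - {w} - B \<inter> B1. {x, y} \<notin> E"
        proof (intro ballI notI)
          fix x y assume x: "x \<in> B \<inter> B1" and y: "y \<in> V - {w} - B \<inter> B1" and e: "{x,y} \<in> E"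
          have e': "{y,x} \<in> E" using e by (simp add: insert_commute)
          show False
          proof (cases "y \<in> A")
            case True
            have "y = u" by (rule crossA'[OF True _ e']) (use x in auto)
            hence "{u,x} = {u,v}" using crossA[OF True _ e'] x by auto
            hence "x = v" by (rule dbl2)
            thus False using x vA1 A1B1(1) by blast
          next
            case False
            hence yB: "y \<in> B" using y unfolding B_def by auto
            hence "y \<notin> B1" using y by auto
            moreover have "y \<noteq> w1" using yB \<open>w1 \<notin> B\<close> by auto
            ultimately have "y \<in> A1" using y A1B1(4) by auto
            hence "{y,x} = {u,u'}" using cross1[OF _ _ e'] x by auto
            hence "x = u \<or> x = u'" by (rule dblR)
            thus False using x u'B AB sA'(5) by auto
          qed
        qed
      qed
    qed
    have B1sub: "B1 \<subseteq> (A - {u, w1}) \<union> ({w} - {w1})"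
    proof
      fix x assume x: "x \<in> B1"
      have "x \<in> V" "x \<noteq> w1" "x \<notin> A1" using x unfolding B1_def by auto
      moreover have "x \<noteq> u" using x A1B1(1) sA1'(5) by auto
      ultimately show "x \<in> (A - {u, w1}) \<union> ({w} - {w1})" using BA1 VAB by blast
    qed
    have "card B1 < card A"
    proof (cases "w1 = w")
      case True
      hence "B1 \<subseteq> A - {u}" using B1sub by auto
      hence "card B1 \<le> card (A - {u})" by (rule card_mono[rotated]) (use finA in simp)
      also have "\<dots> < card A" by (rule card_Diff1_less[OF finA sA'(5)])
      finally show ?thesis .
    next
      case False
      hence w1A': "w1 \<in> A" using w1A by simp
      have "card B1 \<le> card ((A - {u, w1}) \<union> ({w} - {w1}))"
        by (rule card_mono[OF _ B1sub]) (use finA in simp)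
      also have "\<dots> \<le> card (A - {u, w1}) + card ({w} - {w1})" by (rule card_Un_le)
      also have "card (A - {u, w1}) = card A - 2"
        using finA sA'(5) w1A' w1(2) by (simp add: card_Diff_subset)
      also have "card ({w} - {w1}) \<le> 1" using card_mono[of "{w}" "{w} - {w1}"] by auto
      finally have "card B1 \<le> card A - 2 + 1" by simp
      moreover have "card A \<ge> 2"
      proof -
        have "{u,w1} \<subseteq> A" using sA'(5) w1A' by auto
        hence "card {u,w1} \<le> card A" by (rule card_mono[OF finA])
        thus ?thesis using w1(2) by simp
      qed
      ultimately show ?thesis by linarith
    qed
    moreover have "card A \<le> card B1" by (rule minA[OF _ uX sB1]) (use u' in auto)
    ultimately show False by simp
  next
    case True
    have ww1: "w \<noteq> w1" using True AB by auto
    obtain y0 y1 Y where Y: "{y0,y1} = {u,u'}" "y0 \<in> X" "y1 \<in> X" "sep y0 y1 w1 Y" "w \<notin> Y"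
        "\<And>x. x \<in> Y \<Longrightarrow> (y0,x) \<in> R\<^sup>*" "\<And>x. x \<in> V \<Longrightarrow> (y0,x) \<in> R\<^sup>* \<Longrightarrow> x \<in> Y"
    proof (cases "w \<in> A1")
      case True
      show ?thesis
      proof (rule that[of u' u B1])
        show "{u',u} = {u,u'}" by (simp add: insert_commute)
        show "w \<notin> B1" using True A1B1(1) by auto
      qed (use u' uX sB1 B1eq in auto)
    next
      case False
      show ?thesis
      proof (rule that[of u u' A1])
        show "w \<notin> A1" by (rule False)
      qed (use u' uX sA1 A1_def in auto)
    qed
    note sY = sepD[OF Y(4)]
    have crossY: "x = u \<or> x = u'" if "x \<in> Y" "y \<in> V - {w1} - Y" "{x,y} \<in> E" for x y
    proof -
      have "{x,y} = {y0,y1}" by (rule sY(8)[OF that])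
      hence "{x,y} = {u,u'}" using Y(1) by simp
      thus ?thesis by (rule dblL)
    qed
    have crossY2: "y = u \<or> y = u'" if "x \<in> Y" "y \<in> V - {w1} - Y" "{x,y} \<in> E" for x y
    proof -
      have "{x,y} = {y0,y1}" by (rule sY(8)[OF that])
      hence "{x,y} = {u,u'}" using Y(1) by simp
      thus ?thesis by (rule dblR)
    qed
    have wV1Y: "w \<in> V - {w1} - Y" using sA'(2) ww1 Y(5) by auto
    show False
    proof (cases "Y \<inter> B = {}")
      case True
      have YA: "Y \<subseteq> A"
      proof
        fix x assume x: "x \<in> Y"
        hence "x \<in> V" "x \<noteq> w" using sY(7) Y(5) by auto
        thus "x \<in> A" using VAB x True by blast
      qed
      show False
      proof (cases "y1 \<in> A")
        case True
        have "Y \<subseteq> A - {y1}" using YA sY(6) by auto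
        hence "card Y \<le> card (A - {y1})" by (rule card_mono[rotated]) (use finA in simp)
        also have "\<dots> < card A" by (rule card_Diff1_less[OF finA True])
        finally have "card Y < card A" .
        moreover have "card A \<le> card Y" by (rule minA[OF Y(2) Y(3) Y(4)])
        ultimately show False by simp
      next
        case False
        have "y1 = u \<or> y1 = u'" using Y(1) by (rule dblR)
        hence y1u': "y1 = u'" using False sA'(5) by blast
        have y0u: "y0 = u" by (rule dbl3[OF Y(1) y1u' u'V(2)])
        have u'w: "u' = w" using u'A False y1u' by blast
        show False
        proof (cases "Y = A")
          case False
          hence "Y \<subset> A" using YA by auto
          hence "card Y < card A" by (rule psubset_card_mono[OF finA])
          moreover have "card A \<le> card Y" by (rule minA[OF Y(2) Y(3) Y(4)])
          ultimately show False by simp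
        next
          case True
          show False
          proof (rule ext[of u A w])
            show "u \<in> A" by (rule sA'(5))
            show "A \<subseteq> V" using sA'(7) by auto
            show "w \<in> V - A" using sA'(2) AB by auto
            show "\<forall>x\<in>A. \<forall>y\<in>V - A. {x, y} \<in> E \<longrightarrow> x = u"
            proof (intro ballI impI)
              fix x y assume x: "x \<in> A" and y: "y \<in> V - A" and e: "{x,y} \<in> E"
              show "x = u"
              proof (cases "y = w")
                case True
                have "x = u \<or> x = u'" using crossY[of x y] x y e True wV1Y \<open>Y = A\<close> by auto
                thus ?thesis using x u'w AB by auto
              next
                case False
                hence "y \<in> B" using y unfolding B_def by auto
                thus ?thesis using crossA'[OF x _ e] by simp
              qed
            qed
            have "nb E u - A \<subseteq> {v, w}"
            proof
              fix y assume y: "y \<in> nb E u - A"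
              hence yV: "y \<in> V" and e: "{u,y} \<in> E" using nb_V unfolding nb_def by auto
              show "y \<in> {v,w}"
              proof (cases "y = w")
                case False
                hence "y \<in> B" using y yV unfolding B_def by auto
                hence "{u,y} = {u,v}" by (rule crossA[OF sA'(5) _ e])
                hence "y = v" by (rule dbl2)
                thus ?thesis by simp
              qed simp
            qed
            hence "card (nb E u - A) \<le> card {v,w}" by (rule card_mono[rotated]) simp
            also have "\<dots> \<le> 2" by (simp add: card_insert_le_m1)
            finally show "card (nb E u - A) \<le> 2" .
            show "card (nb E u) \<ge> 3" using d3 uX by auto
          qed
        qed
      qed
    next
      case False
      then obtain b where b: "b \<in> Y" "b \<in> B" by blast
      have y0A: "y0 \<in> A"
      proof -
        have "y0 = u \<or> y0 = u'" using Y(1) by (rule dblL)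
        moreover have "y0 \<noteq> w" using sY(5) Y(5) by auto
        ultimately show ?thesis using sA'(5) u'A by blast
      qed
      have "(y0,b) \<in> R\<^sup>*" by (rule Y(6)[OF b(1)])
      moreover have "b \<notin> A" using b AB by auto
      ultimately obtain a b' where ab: "(y0,a) \<in> R\<^sup>*" "(a,b') \<in> R" "a \<in> A" "b' \<notin> A"
        using cross[of y0 b R A] y0A by blast
      have eab: "{a,b'} \<in> E" "b' \<noteq> w1" using ab(2) unfolding R_def ar_def by auto
      have b'V: "b' \<in> V" using edgeV eab(1) by auto
      have "(y0,b') \<in> R\<^sup>*" using ab(1,2) by auto
      hence b'Y: "b' \<in> Y" using Y(7) b'V by auto
      hence "b' \<noteq> w" using Y(5) by auto
      hence b'B: "b' \<in> B" using b'V ab(4) VAB by blast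
      have au: "a = u" by (rule crossA'[OF ab(3) b'B eab(1)])
      have uY: "u \<in> Y" using Y(7) ab(1) au uV by auto
      have y0u: "y0 = u"
      proof (rule ccontr)
        assume "y0 \<noteq> u"
        hence "y0 = u'" using Y(1) dblL by blast
        hence "y1 = u" by (rule dbl5[OF Y(1) _ u'V(2)])
        thus False using sY(6) uY by simp
      qed
      have y1u': "y1 = u'" by (rule dbl4[OF Y(1) y0u u'V(2)])
      have u'Y: "u' \<notin> Y" using sY(6) y1u' by simp
      show False
      proof (rule ext[of u "A \<inter> Y" w])
        show "u \<in> A \<inter> Y" using sA'(5) uY by auto
        show "A \<inter> Y \<subseteq> V" using sA'(7) by auto
        show "w \<in> V - A \<inter> Y" using sA'(2) AB by auto
        show "\<forall>x\<in>A \<inter> Y. \<forall>y\<in>V - A \<inter> Y. {x, y} \<in> E \<longrightarrow> x = u"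
        proof (intro ballI impI)
          fix x y assume x: "x \<in> A \<inter> Y" and y: "y \<in> V - A \<inter> Y" and e: "{x,y} \<in> E"
          show "x = u"
          proof (cases "y \<in> B")
            case True
            thus ?thesis using crossA'[OF _ True e] x by auto
          next
            case False
            have "y \<noteq> w1" using False True by auto
            moreover have "y \<notin> Y"
            proof
              assume "y \<in> Y"
              hence "y \<noteq> w" using Y(5) by auto
              hence "y \<in> A" using VAB y False by auto
              thus False using y \<open>y \<in> Y\<close> by auto
            qed
            ultimately have "y \<in> V - {w1} - Y" using y by auto
            hence "x = u \<or> x = u'" using crossY[of x y] x e by auto
            thus ?thesis using x u'Y by auto
          qed
        qed
        have "nb E u - A \<inter> Y \<subseteq> {v, u'}"
        proof
          fix y assume y: "y \<in> nb E u - A \<inter> Y"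
          hence yV: "y \<in> V" and e: "{u,y} \<in> E" using nb_V unfolding nb_def by auto
          show "y \<in> {v,u'}"
          proof (cases "y \<in> B")
            case True
            hence "{u,y} = {u,v}" by (rule crossA[OF sA'(5) _ e])
            hence "y = v" by (rule dbl2)
            thus ?thesis by simp
          next
            case False
            have "y \<noteq> w1" using False True by auto
            moreover have "y \<notin> Y"
            proof
              assume "y \<in> Y"
              hence "y \<noteq> w" using Y(5) by auto
              hence "y \<in> A" using VAB yV False by auto
              thus False using y \<open>y \<in> Y\<close> by auto
            qed
            ultimately have "y \<in> V - {w1} - Y" using yV by auto
            hence "y = u \<or> y = u'" using crossY2[of u y] uY e by auto
            moreover have "y \<noteq> u" using edgeV(3)[OF e] by simp
            ultimately show ?thesis by auto
          qed
        qed
        hence "card (nb E u - A \<inter> Y) \<le> card {v,u'}" by (rule card_mono[rotated]) simp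
        also have "\<dots> \<le> 2" by (simp add: card_insert_le_m1)
        finally show "card (nb E u - A \<inter> Y) \<le> 2" .
        show "card (nb E u) \<ge> 3" using d3 uX by auto
      qed
    qed
  qed
qed

end



locale mtc_idx = mtc +
  fixes idx :: "'a \<Rightarrow> nat" and H :: "'a set"
  assumes H_def: "H = {x\<in>V. card (nb E x) \<ge> 3}"
    and inj: "inj_on idx H" and idx_lt: "\<forall>x\<in>H. idx x < card H"
    and one: "\<forall>x\<in>H. card {y \<in> nb E x \<inter> H. idx y < idx x} \<le> 1"
begin

definition idx' where "idx' x = (if x \<in> H then idx x else card V)"
definition rk where "rk f = Min (idx' ` f)"
definition D where "D = max_degree V E"
definition Q where "Q a x \<rho> = {f \<in> E. x \<in> f \<and> f \<noteq> {a,x} \<and> rk f \<le> \<rho>}"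
definition Part where "Part a b \<rho> = {f\<in>E. a \<in> f \<and> f \<noteq> {a,b} \<and> rk f \<le> \<rho>} \<union> (\<Union>x\<in>nb E a - {b}. Q a x \<rho>)"

lemma HV: "H \<subseteq> V" using H_def by auto
lemma finH: "finite H" using HV finV finite_subset by blast
lemma idxV: "x \<in> H \<Longrightarrow> idx x < card V"
  using idx_lt card_mono[OF finV HV] by fastforce

lemma rk2: "rk {x,y} = min (idx' x) (idx' y)" unfolding rk_def by simp

lemma degD: assumes "x \<in> V" shows "card (nb E x) \<le> D"
proof -
  have "degree E x \<le> Max (degree E ` V)" using finV assms by simp
  thus ?thesis unfolding D_def max_degree_def deg_nb .
qed

lemma D2: "D \<ge> 2"
proof -
  have "V \<noteq> {}" using cardV by auto
  then obtain x where "x \<in> V" by blast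
  thus ?thesis using deg2 degD order_trans by blast
qed

lemma nH: "x \<in> V \<Longrightarrow> x \<notin> H \<Longrightarrow> card (nb E x) \<le> 2" using H_def by auto

lemma later:
  assumes x: "x \<in> H" and z: "z \<in> nb E x" "z \<in> H" "idx z < idx x" and r: "\<rho> < idx x"
    and f: "f \<in> E" "x \<in> f" "rk f \<le> \<rho>"
  shows "f = {x,z}"
proof -
  have "f \<in> (\<lambda>y. {x,y}) ` nb E x" using star_eq f by blast
  then obtain y where y: "y \<in> nb E x" "f = {x,y}" by blast
  have "min (idx' x) (idx' y) \<le> \<rho>" using f(3) y(2) rk2 by simp
  moreover have "idx' x = idx x" using x unfolding idx'_def by simp
  ultimately have iy: "idx' y \<le> \<rho>" using r by linarith
  have yH: "y \<in> H"
  proof (rule ccontr)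
    assume "y \<notin> H"
    hence "idx' y = card V" unfolding idx'_def by simp
    thus False using iy r idxV[OF x] by linarith
  qed
  hence "idx y < idx x" using iy r unfolding idx'_def by simp
  let ?S = "{y \<in> nb E x \<inter> H. idx y < idx x}"
  have "y \<in> ?S" "z \<in> ?S" using y yH z \<open>idx y < idx x\<close> by auto
  moreover have "finite ?S" using fin_nb by simp
  moreover have "card ?S \<le> Suc 0" using one x by simp
  ultimately have "y = z" using card_le_Suc0_iff_eq by blast
  thus ?thesis using y by simp
qed

lemma Q_le: assumes "x \<in> nb E a" shows "card (Q a x \<rho>) \<le> card (nb E x) - 1"
proof -
  have "{a,x} \<in> E" using assms unfolding nb_def by simp
  thus ?thesis unfolding Q_def by (rule star_le)
qed

lemma first_le: assumes "b \<in> nb E a"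
  shows "card {f\<in>E. a \<in> f \<and> f \<noteq> {a,b} \<and> rk f \<le> \<rho>} \<le> card (nb E a) - 1"
proof -
  have "{b,a} \<in> E" using assms unfolding nb_def by (simp add: insert_commute)
  hence "card {f\<in>E. a \<in> f \<and> f \<noteq> {b,a} \<and> rk f \<le> \<rho>} \<le> card (nb E a) - 1" by (rule star_le)
  thus ?thesis by (simp add: insert_commute)
qed

lemma card_Part:
  "card (Part a b \<rho>) \<le> card {f\<in>E. a \<in> f \<and> f \<noteq> {a,b} \<and> rk f \<le> \<rho>} + (\<Sum>x\<in>nb E a - {b}. card (Q a x \<rho>))"
proof -
  have "card (Part a b \<rho>) \<le> card {f\<in>E. a \<in> f \<and> f \<noteq> {a,b} \<and> rk f \<le> \<rho>} + card (\<Union>x\<in>nb E a - {b}. Q a x \<rho>)"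
    unfolding Part_def by (rule card_Un_le)
  moreover have "card (\<Union>x\<in>nb E a - {b}. Q a x \<rho>) \<le> (\<Sum>x\<in>nb E a - {b}. card (Q a x \<rho>))"
    by (rule card_UN_le) (use fin_nb in simp)
  ultimately show ?thesis by linarith
qed

lemma conf_sub:
  assumes "{a,b} \<in> E"
  shows "{f\<in>E. (f \<noteq> {a,b} \<and> ({a,b} \<inter> f \<noteq> {} \<or> (\<exists>u\<in>{a,b}. \<exists>v\<in>f. {u,v} \<in> E))) \<and> rk f \<le> \<rho>}
         \<subseteq> Part a b \<rho> \<union> Part b a \<rho>"
proof
  fix f assume f: "f \<in> {f\<in>E. (f \<noteq> {a,b} \<and> ({a,b} \<inter> f \<noteq> {} \<or> (\<exists>u\<in>{a,b}. \<exists>v\<in>f. {u,v} \<in> E))) \<and> rk f \<le> \<rho>}"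
  hence fE: "f \<in> E" and fne: "f \<noteq> {a,b}" "f \<noteq> {b,a}" and r: "rk f \<le> \<rho>"
    by (auto simp: insert_commute)
  show "f \<in> Part a b \<rho> \<union> Part b a \<rho>"
  proof (cases "a \<in> f")
    case True thus ?thesis using fE fne r unfolding Part_def by blast
  next
    case na: False
    show ?thesis
    proof (cases "b \<in> f")
      case True thus ?thesis using fE fne r unfolding Part_def by blast
    next
      case nb': False
      then obtain u v where uv: "u \<in> {a,b}" "v \<in> f" "{u,v} \<in> E" using f na by blast
      have vab: "v \<noteq> a" "v \<noteq> b" using uv(2) na nb' by auto
      show ?thesis
      proof (cases "u = a")
        case True
        have "v \<in> nb E a - {b}" using uv True vab unfolding nb_def by simp
        moreover have "f \<in> Q a v \<rho>" unfolding Q_def using fE uv(2) r na by auto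
        ultimately show ?thesis unfolding Part_def by blast
      next
        case False
        hence "u = b" using uv(1) by simp
        hence "v \<in> nb E b - {a}" using uv vab unfolding nb_def by simp
        moreover have "f \<in> Q b v \<rho>" unfolding Q_def using fE uv(2) r nb' by auto
        ultimately show ?thesis unfolding Part_def by blast
      qed
    qed
  qed
qed

lemma B1: assumes "a \<in> V" "a \<notin> H" "b \<in> nb E a" shows "card (Part a b \<rho>) \<le> D"
proof -
  have ca: "card (nb E a) \<le> 2" using nH assms by simp
  have "card {f\<in>E. a \<in> f \<and> f \<noteq> {a,b} \<and> rk f \<le> \<rho>} \<le> 1" using first_le[OF assms(3), of \<rho>] ca by linarith
  moreover have "(\<Sum>x\<in>nb E a - {b}. card (Q a x \<rho>)) \<le> D - 1"
  proof -
    have "(\<Sum>x\<in>nb E a - {b}. card (Q a x \<rho>)) \<le> of_nat (card (nb E a - {b})) * (D - 1)"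
    proof (rule sum_bounded_above)
      fix x assume x: "x \<in> nb E a - {b}"
      have "card (Q a x \<rho>) \<le> card (nb E x) - 1" using Q_le x by blast
      also have "\<dots> \<le> D - 1" using degD nb_V x by (meson Diff_iff diff_le_mono)
      finally show "card (Q a x \<rho>) \<le> D - 1" .
    qed
    moreover have "card (nb E a - {b}) \<le> 1" using ca assms(3) fin_nb by simp
    ultimately show ?thesis by (metis mult_le_mono1 mult_1 of_nat_id order_trans)
  qed
  ultimately show ?thesis using card_Part[of a b \<rho>] D2 by linarith
qed

lemma B2: assumes a: "a \<in> H" and b: "b \<in> nb E a" shows "card (Part a b (idx a)) \<le> 3 * D - 4"
proof -
  have aV: "a \<in> V" using a HV by auto
  have caD: "card (nb E a) \<le> D" by (rule degD[OF aV])
  have first: "card {f\<in>E. a \<in> f \<and> f \<noteq> {a,b} \<and> rk f \<le> idx a} \<le> D - 1"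
    using first_le[OF b, of "idx a"] caD by linarith
  let ?P = "{y \<in> nb E a \<inter> H. idx y < idx a}"
  let ?N = "nb E a - {b}"
  have finN: "finite ?N" using fin_nb by simp
  have each: "card (Q a x (idx a)) \<le> (if x \<in> ?P then D - 1 else 1)" if x: "x \<in> ?N" for x
  proof -
    have xV: "x \<in> V" using x nb_V by auto
    have ql: "card (Q a x (idx a)) \<le> card (nb E x) - 1" using Q_le x by blast
    show ?thesis
    proof (cases "x \<in> ?P")
      case True
      thus ?thesis using ql degD[OF xV] by simp
    next
      case notP: False
      show ?thesis
      proof (cases "x \<in> H")
        case False
        thus ?thesis using ql nH[OF xV] notP by simp
      next
        case True
        have "x \<noteq> a" using x nb_irr by auto
        hence "idx x \<noteq> idx a" using inj True a unfolding inj_on_def by blast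
        hence gt: "idx a < idx x" using notP True x by auto
        have "Q a x (idx a) = {}"
        proof (rule ccontr)
          assume "Q a x (idx a) \<noteq> {}"
          then obtain f where f: "f \<in> E" "x \<in> f" "f \<noteq> {a,x}" "rk f \<le> idx a" unfolding Q_def by blast
          have "a \<in> nb E x" using x nb_sym by auto
          hence "f = {x,a}" using later[OF True _ a gt gt f(1,2,4)] by simp
          thus False using f(3) by (simp add: insert_commute)
        qed
        thus ?thesis by simp
      qed
    qed
  qed
  have "(\<Sum>x\<in>?N. card (Q a x (idx a))) \<le> (\<Sum>x\<in>?N. (if x \<in> ?P then D - 1 else 1))"
    by (rule sum_mono) (rule each)
  also have "\<dots> = (\<Sum>x\<in>?N \<inter> {x. x \<in> ?P}. D - 1) + (\<Sum>x\<in>?N \<inter> - {x. x \<in> ?P}. 1)"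
    by (rule sum.If_cases[OF finN])
  also have "\<dots> = card (?N \<inter> ?P) * (D - 1) + card (?N - ?P)"
    by (simp add: Diff_eq)
  finally have sm: "(\<Sum>x\<in>?N. card (Q a x (idx a))) \<le> card (?N \<inter> ?P) * (D - 1) + card (?N - ?P)" .
  have kP: "card (?N \<inter> ?P) \<le> 1"
  proof -
    have "card (?N \<inter> ?P) \<le> card ?P" by (rule card_mono) (use fin_nb in auto)
    moreover have "card ?P \<le> 1" using one a by blast
    ultimately show ?thesis by linarith
  qed
  have nsplit: "card ?N = card (?N \<inter> ?P) + card (?N - ?P)"
    using card_Int_Diff[OF finN, of ?P] .
  have cN: "card ?N \<le> D - 1" using b caD fin_nb by simp
  have "(\<Sum>x\<in>?N. card (Q a x (idx a))) \<le> 2 * D - 3"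
  proof (cases "card (?N \<inter> ?P) = 0")
    case True thus ?thesis using sm nsplit cN D2 by simp
  next
    case False
    hence "card (?N \<inter> ?P) = 1" using kP by simp
    thus ?thesis using sm nsplit cN D2 by simp
  qed
  thus ?thesis using first card_Part[of a b "idx a"] D2 by linarith
qed

lemma B3: assumes a: "a \<in> H" and b: "b \<in> nb E a" "b \<in> H" "idx b < idx a"
  shows "card (Part a b (idx b)) \<le> D - 1"
proof -
  have aV: "a \<in> V" using a HV by auto
  have caD: "card (nb E a) \<le> D" by (rule degD[OF aV])
  have first: "{f\<in>E. a \<in> f \<and> f \<noteq> {a,b} \<and> rk f \<le> idx b} = {}"
    using later[OF a b b(3)] by blast
  let ?N = "nb E a - {b}"
  have "(\<Sum>x\<in>?N. card (Q a x (idx b))) \<le> of_nat (card ?N) * 1"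
  proof (rule sum_bounded_above)
    fix x assume x: "x \<in> ?N"
    have xV: "x \<in> V" using x nb_V by auto
    have ql: "card (Q a x (idx b)) \<le> card (nb E x) - 1" using Q_le x by blast
    show "card (Q a x (idx b)) \<le> 1"
    proof (cases "x \<in> H")
      case False thus ?thesis using ql nH[OF xV] by simp
    next
      case True
      have "x \<noteq> a" using x nb_irr by auto
      hence ne: "idx x \<noteq> idx a" using inj True a unfolding inj_on_def by blast
      have gt: "idx a < idx x"
      proof (rule ccontr)
        assume "\<not> idx a < idx x"
        hence lt: "idx x < idx a" using ne by simp
        let ?S = "{y \<in> nb E a \<inter> H. idx y < idx a}"
        have "x \<in> ?S" "b \<in> ?S" using x True lt b by auto
        moreover have "finite ?S" using fin_nb by simp
        moreover have "card ?S \<le> Suc 0" using one a by simp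
        ultimately have "x = b" using card_le_Suc0_iff_eq by blast
        thus False using x by simp
      qed
      have "Q a x (idx b) = {}"
      proof (rule ccontr)
        assume "Q a x (idx b) \<noteq> {}"
        then obtain f where f: "f \<in> E" "x \<in> f" "f \<noteq> {a,x}" "rk f \<le> idx b" unfolding Q_def by blast
        have "a \<in> nb E x" using x nb_sym by auto
        moreover have "idx b < idx x" using gt b(3) by simp
        ultimately have "f = {x,a}" using later[OF True _ a gt _ f(1,2,4)] by simp
        thus False using f(3) by (simp add: insert_commute)
      qed
      thus ?thesis by simp
    qed
  qed
  moreover have "card ?N \<le> D - 1" using b caD fin_nb by simp
  ultimately show ?thesis using card_Part[of a b "idx b"] first by simp
qed

lemma count:
  assumes e: "e \<in> E"
  shows "card {f\<in>E. (f \<noteq> e \<and> (e \<inter> f \<noteq> {} \<or> (\<exists>u\<in>e. \<exists>v\<in>f. {u,v} \<in> E))) \<and> rk f \<le> rk e} \<le> 4 * D - 4"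
proof -
  obtain a0 b0 where ab0: "e = {a0,b0}" "a0 \<noteq> b0" "a0 \<in> V" "b0 \<in> V" using edge[OF e] by blast
  obtain a b where ab: "e = {a,b}" "a \<noteq> b" "a \<in> V" "b \<in> V" "idx' a \<le> idx' b"
  proof (cases "idx' a0 \<le> idx' b0")
    case True thus ?thesis using that ab0 by blast
  next
    case False thus ?thesis using that[of b0 a0] ab0 by (auto simp: insert_commute)
  qed
  have re: "rk e = idx' a" using ab rk2 by simp
  have eab: "{a,b} \<in> E" using e ab by simp
  have bn: "b \<in> nb E a" and an: "a \<in> nb E b" using eab unfolding nb_def by (auto simp: insert_commute)
  let ?C = "{f\<in>E. (f \<noteq> {a,b} \<and> ({a,b} \<inter> f \<noteq> {} \<or> (\<exists>u\<in>{a,b}. \<exists>v\<in>f. {u,v} \<in> E))) \<and> rk f \<le> idx' a}"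
  have "card ?C \<le> card (Part a b (idx' a) \<union> Part b a (idx' a))"
  proof (rule card_mono[OF _ conf_sub[OF eab]])
    have "Part a b (idx' a) \<union> Part b a (idx' a) \<subseteq> E" unfolding Part_def Q_def by blast
    thus "finite (Part a b (idx' a) \<union> Part b a (idx' a))" using finE finite_subset by blast
  qed
  also have "\<dots> \<le> card (Part a b (idx' a)) + card (Part b a (idx' a))" by (rule card_Un_le)
  also have "\<dots> \<le> 4 * D - 4"
  proof (cases "a \<in> H")
    case False
    have "b \<notin> H"
    proof
      assume "b \<in> H"
      hence "idx' b < card V" using idxV unfolding idx'_def by simp
      thus False using ab(5) False unfolding idx'_def by simp
    qed
    hence "card (Part b a (idx' a)) \<le> D" by (rule B1[OF ab(4) _ an])
    moreover have "card (Part a b (idx' a)) \<le> D" by (rule B1[OF ab(3) False bn])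
    ultimately show ?thesis using D2 by linarith
  next
    case aH: True
    hence ia: "idx' a = idx a" unfolding idx'_def by simp
    have p1: "card (Part a b (idx a)) \<le> 3 * D - 4" by (rule B2[OF aH bn])
    show ?thesis
    proof (cases "b \<in> H")
      case False
      thus ?thesis using p1 B1[OF ab(4) False an, of "idx a"] ia D2 by simp
    next
      case True
      have "idx a \<noteq> idx b" using inj aH True ab(2) unfolding inj_on_def by blast
      hence "idx a < idx b" using ab(5) aH True unfolding idx'_def by simp
      hence "card (Part b a (idx a)) \<le> D - 1" using B3[OF True an aH] by simp
      thus ?thesis using p1 ia D2 by simp
    qed
  qed
  finally show ?thesis using ab(1) re by simp
qed

end



theorem corollary5:
  fixes V :: "'a set" and E :: "'a set set"
  assumes "simple_graph V E"
    and "minimally_two_connected V E"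
  shows "strong_chromatic_index E \<le> 4 * max_degree V E - 3"
proof -
  interpret mtc V E using assms by unfold_locales
  define H where "H = {x\<in>V. card (nb E x) \<ge> 3}"
  have finH: "finite H" unfolding H_def using finV by simp
  have "\<forall>Y\<subseteq>H. Y \<noteq> {} \<longrightarrow> (\<exists>y\<in>Y. card (nb E y \<inter> Y) \<le> 1)"
  proof (intro allI impI)
    fix Y assume Y: "Y \<subseteq> H" "Y \<noteq> {}"
    show "\<exists>y\<in>Y. card (nb E y \<inter> Y) \<le> 1"
    proof (rule forest)
      show "Y \<subseteq> V" using Y unfolding H_def by auto
      show "Y \<noteq> {}" by (rule Y(2))
      show "\<forall>x\<in>Y. 3 \<le> card (nb E x)" using Y unfolding H_def by auto
    qed
  qed
  then obtain idx :: "'a \<Rightarrow> nat" where idx: "inj_on idx H" "\<forall>x\<in>H. idx x < card H"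
      "\<forall>x\<in>H. card {y \<in> nb E x \<inter> H. idx y < idx x} \<le> 1"
    using degen_order[OF finH, of "nb E"] by blast
  interpret mi: mtc_idx V E idx H
  proof unfold_locales
    show "H = {x \<in> V. 3 \<le> card (nb E x)}" by (rule H_def)
  qed (use idx in auto)
  define cf where "cf = (\<lambda>e f. e \<noteq> f \<and> (e \<inter> f \<noteq> {} \<or> (\<exists>u\<in>e. \<exists>v\<in>f. {u,v} \<in> E)))"
  have bnd: "\<forall>e\<in>E. card {f\<in>E. cf e f \<and> mi.rk f \<le> mi.rk e} \<le> 4 * mi.D - 4"
  proof
    fix e assume e: "e \<in> E"
    have "{f\<in>E. cf e f \<and> mi.rk f \<le> mi.rk e} =
      {f\<in>E. (f \<noteq> e \<and> (e \<inter> f \<noteq> {} \<or> (\<exists>u\<in>e. \<exists>v\<in>f. {u,v} \<in> E))) \<and> mi.rk f \<le> mi.rk e}"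
      unfolding cf_def by blast
    thus "card {f\<in>E. cf e f \<and> mi.rk f \<le> mi.rk e} \<le> 4 * mi.D - 4" using mi.count[OF e] by simp
  qed
  have sym: "cf f e" if "cf e f" for e f
  proof -
    have "e \<noteq> f" "e \<inter> f \<noteq> {} \<or> (\<exists>u\<in>e. \<exists>v\<in>f. {u,v} \<in> E)" using that unfolding cf_def by auto
    moreover have "(\<exists>u\<in>e. \<exists>v\<in>f. {u,v} \<in> E) \<Longrightarrow> (\<exists>v\<in>f. \<exists>u\<in>e. {v,u} \<in> E)"
      by (metis insert_commute)
    ultimately show ?thesis unfolding cf_def by blast
  qed
  have irr: "\<not> cf e e" for e unfolding cf_def by simp
  obtain c where c: "\<forall>e\<in>E. \<forall>f\<in>E. cf e f \<longrightarrow> c e \<noteq> c f" "c ` E \<subseteq> {..<Suc (4 * mi.D - 4)}"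
    using greedy[OF finE bnd sym irr] by blast
  have sec: "strong_edge_coloring E c" unfolding strong_edge_coloring_def using c(1) unfolding cf_def by blast
  have "strong_chromatic_index E \<le> Suc (4 * mi.D - 4)"
    unfolding strong_chromatic_index_def by (rule Least_le) (use sec c(2) in blast)
  moreover have "mi.D = max_degree V E" by (rule mi.D_def)
  ultimately show ?thesis using mi.D2 by simp
qed

end
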